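(* Let $k\in\mathbb Z_{\ge1}$. With probability $1-\mathrm{negl}(n)$ over $G\sim G(n,1/2)$ the following holds: for every vertex set $S\subseteq[n]$ of size $k$ and every family $\mathcal C\subseteq\{C:\emptyset\ne C\subseteq S\}$ there exists a vertex $v\notin S$ such that for every $\emptyset\ne C\subseteq S$, we have $C\in\mathcal C$ if and only if the number of vertices that are adjacent to every vertex in $\{v\}\cup C$ is odd.
   Context: $G(n,1/2)$ is the uniform distribution over simple graphs on vertex set $[n]$ (each pair an edge independently with probability $1/2$). A function is negligible ($\mathrm{negl}(n)$) if eventually below $1/p(n)$ in absolute value for every polynomial $p$. *)

theory Defs
  imports Complex_Main
begin

text \<open>Simple graphs on vertex set [n], represented as {0..<n}: a graph is its edge set,
  a set of 2-element subsets of the vertex set.\<close>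
definition all_graphs :: "nat \<Rightarrow> nat set set set" where
  "all_graphs n = Pow {e. e \<subseteq> {..<n} \<and> card e = 2}"

text \<open>Probability of an event under G(n,1/2), i.e. the uniform distribution on all_graphs n.\<close>
definition prob_G :: "nat \<Rightarrow> (nat set set \<Rightarrow> bool) \<Rightarrow> real" where
  "prob_G n P = real (card {E \<in> all_graphs n. P E}) / real (card (all_graphs n))"

text \<open>Negligible functions: eventually below 1/p(n) for every polynomial p;
  equivalently (standard form) eventually below n^(-c) for every c.\<close>
definition negl :: "(nat \<Rightarrow> real) \<Rightarrow> bool" where
  "negl f \<longleftrightarrow> (\<forall>c::nat. \<forall>\<^sub>F n in sequentially. \<bar>f n\<bar> < 1 / real n ^ c)"

definition common_nbrs :: "nat \<Rightarrow> nat set set \<Rightarrow> nat set \<Rightarrow> nat" where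
  "common_nbrs n E A = card {w \<in> {..<n}. \<forall>x\<in>A. {w, x} \<in> E}"

definition good_graph :: "nat \<Rightarrow> nat \<Rightarrow> nat set set \<Rightarrow> bool" where
  "good_graph k n E \<longleftrightarrow>
     (\<forall>S. S \<subseteq> {..<n} \<and> card S = k \<longrightarrow>
       (\<forall>\<C>. \<C> \<subseteq> {C. C \<noteq> {} \<and> C \<subseteq> S} \<longrightarrow>
         (\<exists>v\<in>{..<n}. v \<notin> S \<and>
            (\<forall>C. C \<noteq> {} \<and> C \<subseteq> S \<longrightarrow> (C \<in> \<C> \<longleftrightarrow> odd (common_nbrs n E (insert v C)))))))"

end

theory Submission
  imports Defs
begin

lemma card_odd_mod2:
  assumes "finite X"
  shows "card {T\<in>X. odd (f T :: nat)} mod 2 = (\<Sum>T\<in>X. f T) mod 2"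
  using assms
proof (induction X rule: finite_induct)
  case empty then show ?case by simp
next
  case (insert x X)
  have fX: "finite {T\<in>X. odd (f T)}" using insert.hyps by simp
  have c: "card {T\<in>insert x X. odd (f T)} = f x mod 2 + card {T\<in>X. odd (f T)}"
  proof (cases "odd (f x)")
    case True
    then have "{T\<in>insert x X. odd (f T)} = insert x {T\<in>X. odd (f T)}" by auto
    then show ?thesis using True insert.hyps fX by (simp add: odd_iff_mod_2_eq_one)
  next
    case False
    then have "{T\<in>insert x X. odd (f T)} = {T\<in>X. odd (f T)}" by auto
    then show ?thesis using False by (simp add: even_iff_mod_2_eq_zero)
  qed
  have "card {T\<in>insert x X. odd (f T)} mod 2 = (f x + card {T\<in>X. odd (f T)}) mod 2"
    unfolding c by (simp add: mod_add_left_eq)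
  also have "\<dots> = (f x + (\<Sum>T\<in>X. f T)) mod 2"
    by (metis insert.IH mod_add_right_eq)
  also have "\<dots> = (\<Sum>T\<in>insert x X. f T) mod 2" using insert.hyps by simp
  finally show ?case .
qed

lemma card_between:
  assumes "finite U" "C \<subseteq> U"
  shows "card {T. C \<subseteq> T \<and> T \<subseteq> U} = 2 ^ card (U - C)"
proof -
  have "{T. C \<subseteq> T \<and> T \<subseteq> U} = (\<lambda>X. X \<union> C) ` Pow (U - C)"
  proof (intro equalityI subsetI)
    fix T assume "T \<in> {T. C \<subseteq> T \<and> T \<subseteq> U}"
    then have "T = (T - C) \<union> C" "T - C \<in> Pow (U - C)" by auto
    then show "T \<in> (\<lambda>X. X \<union> C) ` Pow (U - C)" by blast
  qed (use assms in auto)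
  moreover have "inj_on (\<lambda>X. X \<union> C) (Pow (U - C))"
    by (rule inj_onI) blast
  ultimately show ?thesis using assms by (simp add: card_image card_Pow)
qed

lemma mobius2:
  assumes S: "finite S" and D: "D \<subseteq> Pow S" and C: "C \<subseteq> S"
  shows "odd (card {T. T \<subseteq> S \<and> C \<subseteq> T \<and> odd (card {U\<in>D. T \<subseteq> U})}) \<longleftrightarrow> C \<in> D"
proof -
  define A where "A = {T. T \<subseteq> S \<and> C \<subseteq> T}"
  have fA: "finite A" using S unfolding A_def by (rule rev_finite_subset[OF finite_Pow_iff[THEN iffD2]]) auto
  have fD: "finite D" using D S by (meson finite_Pow_iff rev_finite_subset)
  have e1: "{T. T \<subseteq> S \<and> C \<subseteq> T \<and> odd (card {U\<in>D. T \<subseteq> U})} = {T\<in>A. odd (card {U\<in>D. T \<subseteq> U})}"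
    unfolding A_def by auto
  have g: "card {U\<in>D. T \<subseteq> U} = (\<Sum>U\<in>D. if T \<subseteq> U then 1 else 0)" for T
  proof -
    have "{U\<in>D. T \<subseteq> U} = D \<inter> Collect ((\<subseteq>) T)" by auto
    then show ?thesis using fD by (simp add: sum.If_cases)
  qed
  have "(\<Sum>T\<in>A. card {U\<in>D. T \<subseteq> U}) = (\<Sum>T\<in>A. \<Sum>U\<in>D. if T \<subseteq> U then 1 else 0)"
    by (simp add: g)
  also have "\<dots> = (\<Sum>U\<in>D. \<Sum>T\<in>A. if T \<subseteq> U then 1 else 0)"
    by (rule sum.swap)
  also have "\<dots> = (\<Sum>U\<in>D. card {T\<in>A. T \<subseteq> U})"
    using fA by (simp add: sum.If_cases Int_def)
  also have "\<dots> = (\<Sum>U\<in>D. if C \<subseteq> U then 2 ^ card (U - C) else 0)"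
  proof (rule sum.cong[OF refl])
    fix U assume U: "U \<in> D"
    then have US: "U \<subseteq> S" using D by auto
    show "card {T\<in>A. T \<subseteq> U} = (if C \<subseteq> U then 2 ^ card (U - C) else 0)"
    proof (cases "C \<subseteq> U")
      case True
      have "{T\<in>A. T \<subseteq> U} = {T. C \<subseteq> T \<and> T \<subseteq> U}" unfolding A_def using US by auto
      moreover have "finite U" using US S finite_subset by blast
      ultimately show ?thesis using True card_between[of U C] by simp
    next
      case False
      have e0: "{T\<in>A. T \<subseteq> U} = {}" unfolding A_def using False by auto
      show ?thesis using False by (subst e0) simp
    qed
  qed
  finally have sumeq: "(\<Sum>T\<in>A. card {U\<in>D. T \<subseteq> U}) = (\<Sum>U\<in>D. if C \<subseteq> U then 2 ^ card (U - C) else 0)" .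
  define h where "h U = (if C \<subseteq> U then 2 ^ card (U - C) else (0::nat))" for U
  have heven: "even (h U)" if "U \<in> D" "U \<noteq> C" for U
  proof (cases "C \<subseteq> U")
    case True
    then have "U - C \<noteq> {}" using that by auto
    moreover have "finite (U - C)" using that D S finite_subset by blast
    ultimately have "card (U - C) > 0" by (simp add: card_gt_0_iff)
    then show ?thesis using True unfolding h_def by simp
  qed (simp add: h_def)
  have ev2: "even (\<Sum>U\<in>D - {C}. h U)" by (rule dvd_sum) (use heven in auto)
  have hC: "h C = 1" unfolding h_def by simp
  have "(\<Sum>U\<in>D. h U) mod 2 = (if C \<in> D then 1 else 0)"
  proof (cases "C \<in> D")
    case True
    then have "(\<Sum>U\<in>D. h U) = h C + (\<Sum>U\<in>D - {C}. h U)" using fD by (simp add: sum.remove)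
    then show ?thesis using True ev2 hC by (auto elim!: evenE)
  next
    case False
    then have "D - {C} = D" by auto
    then show ?thesis using False ev2 by simp
  qed
  then have "card {T\<in>A. odd (card {U\<in>D. T \<subseteq> U})} mod 2 = (if C \<in> D then 1 else 0)"
    using card_odd_mod2[OF fA, of "\<lambda>T. card {U\<in>D. T \<subseteq> U}"] sumeq unfolding h_def by simp
  then have X: "card {T\<in>A. odd (card {U\<in>D. T \<subseteq> U})} mod 2 = (if C \<in> D then 1 else 0)" .
  show ?thesis
  proof (cases "C \<in> D")
    case True
    then have "card {T\<in>A. odd (card {U\<in>D. T \<subseteq> U})} mod 2 = 1" using X by simp
    then show ?thesis unfolding e1 using True by (simp only: odd_iff_mod_2_eq_one simp_thms)
  next
    case False
    then have "card {T\<in>A. odd (card {U\<in>D. T \<subseteq> U})} mod 2 = 0" using X by simp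
    then show ?thesis unfolding e1 using False by (simp only: even_iff_mod_2_eq_zero simp_thms)
  qed
qed

lemma indep_count:
  fixes P :: "'i \<Rightarrow> 'e set \<Rightarrow> bool" and D :: "'i \<Rightarrow> 'e set"
  assumes "finite I" "finite U" "0 \<le> q"
   and "\<forall>i\<in>I. D i \<subseteq> U"
   and "\<forall>i\<in>I. \<forall>j\<in>I. i \<noteq> j \<longrightarrow> D i \<inter> D j = {}"
   and "\<forall>i\<in>I. \<forall>E E'. E \<subseteq> U \<longrightarrow> E' \<subseteq> U \<longrightarrow> (\<forall>e. e \<notin> \<Union>(D ` (I - {i})) \<longrightarrow> (e\<in>E \<longleftrightarrow> e\<in>E')) \<longrightarrow> P i E = P i E'"
   and "\<forall>E E'. E \<subseteq> U \<longrightarrow> E' \<subseteq> U \<longrightarrow> (\<forall>e. e \<notin> \<Union>(D ` I) \<longrightarrow> (e\<in>E \<longleftrightarrow> e\<in>E')) \<longrightarrow> Q E = Q E'"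
   and "\<forall>i\<in>I. \<forall>E. E \<subseteq> U \<longrightarrow> Q E \<longrightarrow> real (card {X\<in>Pow (D i). P i ((E - D i) \<union> X)}) \<le> q * 2 ^ card (D i)"
  shows "real (card {E\<in>Pow U. Q E \<and> (\<forall>i\<in>I. P i E)}) \<le> q ^ card I * 2 ^ card U"
  using assms
proof (induction I arbitrary: U rule: finite_induct)
  case empty
  have "card {E\<in>Pow U. Q E \<and> (\<forall>i\<in>{}. P i E)} \<le> card (Pow U)"
    using empty.prems(1) by (intro card_mono) auto
  then show ?case using empty.prems(1) by (simp add: card_Pow)
next
  case (insert i J U)
  note Pd = insert.prems(5)[rule_format]
  note Qd = insert.prems(6)[rule_format]
  note Bd = insert.prems(7)[rule_format]
  define Di where "Di = D i"
  define U' where "U' = U - Di"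
  define G where "G = {E0\<in>Pow U'. Q E0 \<and> (\<forall>j\<in>J. P j E0)}"
  have DiU: "Di \<subseteq> U" using insert.prems(3) unfolding Di_def by simp
  have fU: "finite U" using insert.prems(1) .
  have fDi: "finite Di" using DiU fU finite_subset by blast
  have fU': "finite U'" using fU unfolding U'_def by simp
  have IH: "real (card G) \<le> q ^ card J * 2 ^ card U'"
    unfolding G_def
  proof (rule insert.IH)
    show "finite U'" by (rule fU')
    show "0 \<le> q" using insert.prems(2) .
    show "\<forall>j\<in>J. D j \<subseteq> U'"
    proof
      fix j assume j: "j \<in> J"
      have "i \<noteq> j" using j insert.hyps by auto
      then have "D j \<inter> Di = {}" using insert.prems(4) j unfolding Di_def by blast
      moreover have "D j \<subseteq> U" using insert.prems(3) j by blast
      ultimately show "D j \<subseteq> U'" unfolding U'_def by blast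
    qed
    show "\<forall>ia\<in>J. \<forall>j\<in>J. ia \<noteq> j \<longrightarrow> D ia \<inter> D j = {}" using insert.prems(4) by blast
    show "\<forall>ia\<in>J. \<forall>E E'. E \<subseteq> U' \<longrightarrow> E' \<subseteq> U' \<longrightarrow> (\<forall>e. e \<notin> \<Union> (D ` (J - {ia})) \<longrightarrow> (e \<in> E) = (e \<in> E')) \<longrightarrow> P ia E = P ia E'"
    proof (intro ballI allI impI)
      fix j E E' assume j: "j \<in> J" and E: "E \<subseteq> U'" "E' \<subseteq> U'" and ag: "\<forall>e. e \<notin> \<Union> (D ` (J - {j})) \<longrightarrow> (e \<in> E) = (e \<in> E')"
      have ag2: "\<forall>e. e \<notin> \<Union> (D ` (insert i J - {j})) \<longrightarrow> (e \<in> E) = (e \<in> E')"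
        using ag by auto
      show "P j E = P j E'"
        by (rule Pd[of j E E']) (use j E ag2 in \<open>auto simp: U'_def\<close>)
    qed
    show "\<forall>E E'. E \<subseteq> U' \<longrightarrow> E' \<subseteq> U' \<longrightarrow> (\<forall>e. e \<notin> \<Union> (D ` J) \<longrightarrow> (e \<in> E) = (e \<in> E')) \<longrightarrow> Q E = Q E'"
    proof (intro allI impI)
      fix E E' assume E: "E \<subseteq> U'" "E' \<subseteq> U'" and ag: "\<forall>e. e \<notin> \<Union> (D ` J) \<longrightarrow> (e \<in> E) = (e \<in> E')"
      have ag2: "\<forall>e. e \<notin> \<Union> (D ` (insert i J)) \<longrightarrow> (e \<in> E) = (e \<in> E')"
        using ag by auto
      show "Q E = Q E'"
        by (rule Qd[of E E']) (use E ag2 in \<open>auto simp: U'_def\<close>)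
    qed
    show "\<forall>ia\<in>J. \<forall>E. E \<subseteq> U' \<longrightarrow> Q E \<longrightarrow> real (card {X \<in> Pow (D ia). P ia (E - D ia \<union> X)}) \<le> q * 2 ^ card (D ia)"
    proof (intro ballI allI impI)
      fix j E assume "j \<in> J" "E \<subseteq> U'" "Q E"
      then show "real (card {X \<in> Pow (D j). P j (E - D j \<union> X)}) \<le> q * 2 ^ card (D j)"
        by (intro Bd) (auto simp: U'_def)
    qed
  qed
  have sub: "{E\<in>Pow U. Q E \<and> (\<forall>j\<in>insert i J. P j E)} \<subseteq> (\<Union>E0\<in>G. (\<lambda>X. E0 \<union> X) ` {X\<in>Pow Di. P i (E0 \<union> X)})"
  proof
    fix E assume "E \<in> {E\<in>Pow U. Q E \<and> (\<forall>j\<in>insert i J. P j E)}"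
    then have E: "E \<subseteq> U" "Q E" "\<forall>j\<in>insert i J. P j E" by auto
    define E0 where "E0 = E - Di"
    have E0U: "E0 \<subseteq> U" using E unfolding E0_def by auto
    have "Q E0 = Q E"
      by (rule Qd[OF E0U E(1)]) (auto simp: E0_def Di_def)
    moreover have "P j E0 = P j E" if "j \<in> J" for j
    proof -
      have "\<forall>e. e \<notin> \<Union> (D ` (insert i J - {j})) \<longrightarrow> (e \<in> E0) = (e \<in> E)"
        using that insert.hyps unfolding E0_def Di_def by auto
      then show ?thesis by (intro Pd[OF _ E0U E(1)]) (use that in auto)
    qed
    ultimately have "E0 \<in> G" unfolding G_def E0_def U'_def using E by auto
    moreover have "E = E0 \<union> (E \<inter> Di)" unfolding E0_def by auto
    moreover have "E \<inter> Di \<in> {X\<in>Pow Di. P i (E0 \<union> X)}"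
      using E \<open>E = E0 \<union> (E \<inter> Di)\<close> by auto
    ultimately show "E \<in> (\<Union>E0\<in>G. (\<lambda>X. E0 \<union> X) ` {X\<in>Pow Di. P i (E0 \<union> X)})" by blast
  qed
  have fG: "finite G" unfolding G_def using fU' by auto
  have cb: "real (card {X\<in>Pow Di. P i (E0 \<union> X)}) \<le> q * 2 ^ card Di" if "E0 \<in> G" for E0
  proof -
    have h: "E0 \<subseteq> U" "Q E0" "E0 - Di = E0" using that unfolding G_def U'_def by auto
    have "real (card {X\<in>Pow (D i). P i ((E0 - D i) \<union> X)}) \<le> q * 2 ^ card (D i)"
      by (rule Bd) (use h in auto)
    then show ?thesis using h(3) unfolding Di_def by simp
  qed
  have "card {E\<in>Pow U. Q E \<and> (\<forall>j\<in>insert i J. P j E)} \<le> card (\<Union>E0\<in>G. (\<lambda>X. E0 \<union> X) ` {X\<in>Pow Di. P i (E0 \<union> X)})"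
    by (rule card_mono[OF _ sub]) (use fG fDi in auto)
  also have "\<dots> \<le> (\<Sum>E0\<in>G. card ((\<lambda>X. E0 \<union> X) ` {X\<in>Pow Di. P i (E0 \<union> X)}))"
    by (rule card_UN_le[OF fG])
  also have "\<dots> \<le> (\<Sum>E0\<in>G. card {X\<in>Pow Di. P i (E0 \<union> X)})"
    by (rule sum_mono, rule card_image_le) (use fDi in simp)
  finally have "real (card {E\<in>Pow U. Q E \<and> (\<forall>j\<in>insert i J. P j E)}) \<le> (\<Sum>E0\<in>G. real (card {X\<in>Pow Di. P i (E0 \<union> X)}))"
    by (simp flip: of_nat_sum)
  also have "\<dots> \<le> (\<Sum>E0\<in>G. q * 2 ^ card Di)"
    by (rule sum_mono) (rule cb)
  also have "\<dots> = real (card G) * (q * 2 ^ card Di)" by simp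
  also have "\<dots> \<le> (q ^ card J * 2 ^ card U') * (q * 2 ^ card Di)"
    by (rule mult_right_mono[OF IH]) (use insert.prems(2) in simp)
  also have "\<dots> = q ^ card (insert i J) * (2 ^ card U' * 2 ^ card Di)"
    using insert.hyps by simp
  also have "2 ^ card U' * 2 ^ card Di = (2::real) ^ card U"
  proof -
    have "card U' = card U - card Di" unfolding U'_def using DiU fDi by (simp add: card_Diff_subset)
    moreover have "card Di \<le> card U" using DiU fU by (simp add: card_mono)
    ultimately show ?thesis by (simp flip: power_add)
  qed
  finally show ?case .
qed

definition vtyp :: "nat set \<Rightarrow> nat set set \<Rightarrow> nat \<Rightarrow> nat set" where
  "vtyp S E w = {s\<in>S. {w, s} \<in> E}"

definition succ :: "nat \<Rightarrow> nat set \<Rightarrow> nat set set \<Rightarrow> nat set set \<Rightarrow> nat \<Rightarrow> bool" where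
  "succ n S F E v \<longleftrightarrow> (\<forall>C. C \<noteq> {} \<and> C \<subseteq> S \<longrightarrow> (C \<in> F \<longleftrightarrow> odd (common_nbrs n E (insert v C))))"

lemma combsolve:
  assumes S: "finite S"
  shows "\<exists>\<T>\<subseteq>{T. T \<noteq> {} \<and> T \<subseteq> S}. \<forall>C. C \<noteq> {} \<and> C \<subseteq> S \<longrightarrow>
           (C \<in> F \<longleftrightarrow> odd (a C + card {T\<in>\<T>. C \<subseteq> T}))"
proof -
  define D where "D = {C. C \<noteq> {} \<and> C \<subseteq> S \<and> ((C \<in> F) \<noteq> odd (a C))}"
  define \<T> where "\<T> = {T. T \<noteq> {} \<and> T \<subseteq> S \<and> odd (card {U\<in>D. T \<subseteq> U})}"
  have sub: "\<T> \<subseteq> {T. T \<noteq> {} \<and> T \<subseteq> S}" unfolding \<T>_def by auto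
  have main: "C \<in> F \<longleftrightarrow> odd (a C + card {T\<in>\<T>. C \<subseteq> T})" if C: "C \<noteq> {}" "C \<subseteq> S" for C
  proof -
    have e: "{T\<in>\<T>. C \<subseteq> T} = {T. T \<subseteq> S \<and> C \<subseteq> T \<and> odd (card {U\<in>D. T \<subseteq> U})}"
      unfolding \<T>_def using C by auto
    have DS: "D \<subseteq> Pow S" unfolding D_def by auto
    have m: "odd (card {T. T \<subseteq> S \<and> C \<subseteq> T \<and> odd (card {U\<in>D. T \<subseteq> U})}) \<longleftrightarrow> C \<in> D"
      by (rule mobius2[OF S DS C(2)])
    have m2: "C \<in> D \<longleftrightarrow> ((C \<in> F) \<noteq> odd (a C))" unfolding D_def using C by simp
    have "odd (card {T\<in>\<T>. C \<subseteq> T}) \<longleftrightarrow> ((C \<in> F) \<noteq> odd (a C))"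
      by (simp only: e m m2)
    then show ?thesis by (simp only: odd_add) blast
  qed
  show ?thesis
    by (rule exI[of _ \<T>], rule conjI[OF sub], intro allI impI, erule conjE, erule main)
qed

lemma permiss:
  assumes "finite S" "w \<notin> S" "T \<subseteq> S"
  shows "real (card {X\<in>Pow ((\<lambda>s. {w, s}) ` S). vtyp S ((E - (\<lambda>s. {w, s}) ` S) \<union> X) w \<noteq> T})
         \<le> (1 - 1 / 2 ^ card S) * 2 ^ card ((\<lambda>s. {w, s}) ` S)"
proof -
  define Dw where "Dw = (\<lambda>s. {w, s}) ` S"
  define XT where "XT = (\<lambda>s. {w, s}) ` T"
  have inj: "inj_on (\<lambda>s. {w, s}) S"
    by (rule inj_onI) (use assms in \<open>auto simp: doubleton_eq_iff\<close>)
  have cD: "card Dw = card S" unfolding Dw_def using inj by (simp add: card_image)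
  have ty: "vtyp S ((E - Dw) \<union> X) w = {s\<in>S. {w, s} \<in> X}" if "X \<subseteq> Dw" for X
    unfolding vtyp_def Dw_def using that by auto
  have "{X\<in>Pow Dw. vtyp S ((E - Dw) \<union> X) w \<noteq> T} = Pow Dw - {XT}"
  proof (intro equalityI subsetI)
    fix X assume "X \<in> {X\<in>Pow Dw. vtyp S ((E - Dw) \<union> X) w \<noteq> T}"
    then have X: "X \<subseteq> Dw" "{s\<in>S. {w, s} \<in> X} \<noteq> T" using ty by auto
    have "{s\<in>S. {w, s} \<in> XT} = T" unfolding XT_def using assms by (auto simp: doubleton_eq_iff)
    then show "X \<in> Pow Dw - {XT}" using X by auto
  next
    fix X assume X: "X \<in> Pow Dw - {XT}"
    have "{s\<in>S. {w, s} \<in> X} \<noteq> T"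
    proof
      assume h: "{s\<in>S. {w, s} \<in> X} = T"
      have "X = XT"
      proof (intro equalityI subsetI)
        fix x assume "x \<in> X"
        then obtain s where "s \<in> S" "x = {w, s}" using X unfolding Dw_def by auto
        then show "x \<in> XT" using h \<open>x \<in> X\<close> unfolding XT_def by auto
      next
        fix x assume "x \<in> XT"
        then show "x \<in> X" using h unfolding XT_def by auto
      qed
      then show False using X by auto
    qed
    then show "X \<in> {X\<in>Pow Dw. vtyp S ((E - Dw) \<union> X) w \<noteq> T}" using X ty by auto
  qed
  moreover have "XT \<in> Pow Dw" unfolding XT_def Dw_def using assms by auto
  moreover have "finite Dw" unfolding Dw_def using assms by simp
  ultimately have "card {X\<in>Pow Dw. vtyp S ((E - Dw) \<union> X) w \<noteq> T} = 2 ^ card S - 1"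
    using cD by (simp add: card_Diff_singleton card_Pow)
  then have "real (card {X\<in>Pow Dw. vtyp S ((E - Dw) \<union> X) w \<noteq> T}) = 2 ^ card S - 1"
    by (simp add: of_nat_diff)
  also have "\<dots> = (1 - 1 / 2 ^ card S) * 2 ^ card Dw" using cD by (simp add: field_simps)
  finally show ?thesis unfolding Dw_def by simp
qed

lemma keyset:
  assumes B: "B \<subseteq> {..<n}" and disj: "S \<inter> A = {}" "S \<inter> B = {}" "A \<inter> B = {}" and v: "v \<in> A"
    and rep: "\<forall>T\<in>NT. rep T \<in> B \<and> vtyp S E (rep T) = T"
    and R: "R = rep ` NT"
    and Dv: "Dv = (\<lambda>b. {v, b}) ` B"
    and DR: "DR = (\<lambda>r. {v, r}) ` R"
    and Y: "Y \<subseteq> Dv - DR"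
    and E1: "E1 = (E - Dv) \<union> Y"
    and TT: "TT \<subseteq> NT"
    and Y': "Y' = (\<lambda>T. {v, rep T}) ` TT"
    and C: "C \<subseteq> S"
  shows "{w\<in>{..<n}. \<forall>x\<in>insert v C. {w, x} \<in> E1 \<union> Y'} =
         {w\<in>{..<n}. w \<notin> R \<and> (\<forall>x\<in>insert v C. {w, x} \<in> E1)} \<union> rep ` {T\<in>TT. C \<subseteq> T}"
proof -
  have vB: "v \<notin> B" and vS: "v \<notin> S" using v disj by auto
  have repB: "rep T \<in> B" if "T \<in> NT" for T using rep that by auto
  have repinj: "rep T1 = rep T2 \<Longrightarrow> T1 \<in> NT \<Longrightarrow> T2 \<in> NT \<Longrightarrow> T1 = T2" for T1 T2
    using rep by metis
  have inDv: "v \<in> e" if "e \<in> Dv" for e using that Dv by auto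
  show ?thesis
  proof (intro equalityI subsetI)
    fix w assume w: "w \<in> {w\<in>{..<n}. \<forall>x\<in>insert v C. {w, x} \<in> E1 \<union> Y'}"
    show "w \<in> {w\<in>{..<n}. w \<notin> R \<and> (\<forall>x\<in>insert v C. {w, x} \<in> E1)} \<union> rep ` {T\<in>TT. C \<subseteq> T}"
    proof (cases "w \<in> R")
      case False
      have "{w, x} \<in> E1" if x: "x \<in> insert v C" for x
      proof (rule ccontr)
        assume "{w, x} \<notin> E1"
        then have "{w, x} \<in> Y'" using w x by auto
        then obtain T where T: "T \<in> TT" "{w, x} = {v, rep T}" using Y' by auto
        have "rep T \<in> B" using T TT repB by auto
        then have "x \<noteq> rep T" using x vB C disj by auto
        then have "w = rep T" using T(2) by (auto simp: doubleton_eq_iff)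
        then show False using False T TT R by auto
      qed
      then show ?thesis using w False by auto
    next
      case True
      then obtain T0 where T0: "T0 \<in> NT" "w = rep T0" using R by auto
      have wB: "w \<in> B" using T0 repB by auto
      have "{w, v} \<in> E1 \<union> Y'" using w by auto
      moreover have "{w, v} \<notin> E1"
      proof -
        have "{w, v} \<in> DR" using True DR by (auto simp: insert_commute)
        moreover have "DR \<subseteq> Dv" using DR Dv R repB by auto
        ultimately show ?thesis using E1 Y by blast
      qed
      ultimately have "{w, v} \<in> Y'" by auto
      then obtain T where T: "T \<in> TT" "{w, v} = {v, rep T}" using Y' by auto
      have "w \<noteq> v" using wB vB by auto
      then have "w = rep T" using T(2) by (auto simp: doubleton_eq_iff)
      then have "T0 = T" using T0 T TT repinj by auto
      then have T0TT: "T0 \<in> TT" using T by auto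
      have "c \<in> T0" if c: "c \<in> C" for c
      proof -
        have cS: "c \<in> S" using c C by auto
        have "{w, c} \<in> E1 \<union> Y'" using w c by auto
        moreover have "{w, c} \<notin> Y'"
        proof
          assume "{w, c} \<in> Y'"
          then obtain T' where "{w, c} = {v, rep T'}" using Y' by auto
          then show False using \<open>w \<noteq> v\<close> cS vS by (auto simp: doubleton_eq_iff)
        qed
        ultimately have "{w, c} \<in> E1" by auto
        moreover have "{w, c} \<notin> Dv" using inDv \<open>w \<noteq> v\<close> cS vS by auto
        ultimately have "{w, c} \<in> E" using E1 Y by auto
        then have "c \<in> vtyp S E w" unfolding vtyp_def using cS by auto
        then show ?thesis using rep T0 by auto
      qed
      then show ?thesis using T0 T0TT by auto
    qed
  next
    fix w assume w: "w \<in> {w\<in>{..<n}. w \<notin> R \<and> (\<forall>x\<in>insert v C. {w, x} \<in> E1)} \<union> rep ` {T\<in>TT. C \<subseteq> T}"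
    show "w \<in> {w\<in>{..<n}. \<forall>x\<in>insert v C. {w, x} \<in> E1 \<union> Y'}"
    proof (cases "w \<in> rep ` {T\<in>TT. C \<subseteq> T}")
      case False
      then show ?thesis using w by auto
    next
      case True
      then obtain T where T: "T \<in> TT" "C \<subseteq> T" "w = rep T" by auto
      have wB: "w \<in> B" using T TT repB by auto
      have "{w, v} \<in> Y'" using T Y' by (auto simp: insert_commute)
      moreover have "{w, c} \<in> E1" if c: "c \<in> C" for c
      proof -
        have "c \<in> vtyp S E w" using rep T TT c by auto
        then have "{w, c} \<in> E" unfolding vtyp_def by auto
        moreover have "w \<noteq> v" "c \<noteq> v" using wB vB c C vS by auto
        then have "{w, c} \<notin> Dv" using inDv by auto
        ultimately show ?thesis using E1 by auto
      qed
      ultimately show ?thesis using wB B by auto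
    qed
  qed
qed

lemma perv:
  assumes S: "S \<subseteq> {..<n}" and B: "B \<subseteq> {..<n}"
    and disj: "S \<inter> A = {}" "S \<inter> B = {}" "A \<inter> B = {}" and v: "v \<in> A"
    and Q: "\<forall>T. T \<noteq> {} \<and> T \<subseteq> S \<longrightarrow> (\<exists>w\<in>B. vtyp S E w = T)"
  shows "real (card {X\<in>Pow ((\<lambda>b. {v, b}) ` B). \<not> succ n S F ((E - (\<lambda>b. {v, b}) ` B) \<union> X) v})
         \<le> (1 - 1 / 2 ^ (2 ^ card S)) * 2 ^ card ((\<lambda>b. {v, b}) ` B)"
proof -
  define NT where "NT = {T. T \<noteq> {} \<and> T \<subseteq> S}"
  have "\<forall>T\<in>NT. \<exists>w. w \<in> B \<and> vtyp S E w = T" using Q unfolding NT_def by auto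
  then obtain rep where rep: "\<forall>T\<in>NT. rep T \<in> B \<and> vtyp S E (rep T) = T" by metis
  define R where "R = rep ` NT"
  define Dv where "Dv = (\<lambda>b. {v, b}) ` B"
  define DR where "DR = (\<lambda>r. {v, r}) ` R"
  have fS: "finite S" using S finite_subset by blast
  have fB: "finite B" using B finite_subset by blast
  have fDv: "finite Dv" unfolding Dv_def using fB by simp
  have RB: "R \<subseteq> B" unfolding R_def using rep by auto
  have DRDv: "DR \<subseteq> Dv" unfolding DR_def Dv_def using RB by auto
  have cDR: "card DR \<le> 2 ^ card S"
  proof -
    have "card DR \<le> card R" unfolding DR_def using RB fB finite_subset by (blast intro: card_image_le)
    also have "\<dots> \<le> card NT" unfolding R_def
      by (rule card_image_le) (use fS in \<open>simp add: NT_def\<close>)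
    also have "\<dots> \<le> card (Pow S)" by (rule card_mono) (use fS in \<open>auto simp: NT_def\<close>)
    finally show ?thesis using fS by (simp add: card_Pow)
  qed
  have repinj: "inj_on rep NT"
    by (rule inj_onI) (metis rep)
  have ex: "\<forall>Y\<in>Pow (Dv - DR). \<exists>Y'. Y' \<subseteq> DR \<and> succ n S F ((E - Dv) \<union> (Y \<union> Y')) v"
  proof
    fix Y assume Y: "Y \<in> Pow (Dv - DR)"
    define E1 where "E1 = (E - Dv) \<union> Y"
    define a where "a C = card {w\<in>{..<n}. w \<notin> R \<and> (\<forall>x\<in>insert v C. {w, x} \<in> E1)}" for C
    obtain TT where TT: "TT \<subseteq> NT" "\<forall>C. C \<noteq> {} \<and> C \<subseteq> S \<longrightarrow> (C \<in> F \<longleftrightarrow> odd (a C + card {T\<in>TT. C \<subseteq> T}))"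
      using combsolve[OF fS, of F a] unfolding NT_def by blast
    define Y' where "Y' = (\<lambda>T. {v, rep T}) ` TT"
    have "Y' \<subseteq> DR" unfolding Y'_def DR_def R_def using TT by auto
    moreover have "succ n S F ((E - Dv) \<union> (Y \<union> Y')) v"
      unfolding succ_def
    proof (intro allI impI)
      fix C assume C: "C \<noteq> {} \<and> C \<subseteq> S"
      have Ysub: "Y \<subseteq> Dv - DR" using Y by auto
      have ks: "{w\<in>{..<n}. \<forall>x\<in>insert v C. {w, x} \<in> E1 \<union> Y'} =
         {w\<in>{..<n}. w \<notin> R \<and> (\<forall>x\<in>insert v C. {w, x} \<in> E1)} \<union> rep ` {T\<in>TT. C \<subseteq> T}"
        by (rule keyset[OF B disj v rep R_def Dv_def DR_def Ysub E1_def TT(1) Y'_def]) (use C in auto)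
      have eq: "(E - Dv) \<union> (Y \<union> Y') = E1 \<union> Y'" by (auto simp: E1_def)
      have fin2: "finite (rep ` {T\<in>TT. C \<subseteq> T})" using TT fS unfolding NT_def
        by (intro finite_imageI) (auto intro: finite_subset[of _ "Pow S"])
      have dj: "{w\<in>{..<n}. w \<notin> R \<and> (\<forall>x\<in>insert v C. {w, x} \<in> E1)} \<inter> rep ` {T\<in>TT. C \<subseteq> T} = {}"
        using TT unfolding R_def by auto
      have c2: "card (rep ` {T\<in>TT. C \<subseteq> T}) = card {T\<in>TT. C \<subseteq> T}"
        by (rule card_image) (rule inj_on_subset[OF repinj], use TT in auto)
      have "common_nbrs n ((E - Dv) \<union> (Y \<union> Y')) (insert v C) = a C + card {T\<in>TT. C \<subseteq> T}"
        unfolding common_nbrs_def eq ks a_def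
        by (subst card_Un_disjoint) (use fin2 dj c2 in auto)
      then show "C \<in> F \<longleftrightarrow> odd (common_nbrs n ((E - Dv) \<union> (Y \<union> Y')) (insert v C))"
        using TT(2) C by simp
    qed
    ultimately show "\<exists>Y'. Y' \<subseteq> DR \<and> succ n S F ((E - Dv) \<union> (Y \<union> Y')) v" by blast
  qed
  then obtain g where g: "\<forall>Y\<in>Pow (Dv - DR). g Y \<subseteq> DR \<and> succ n S F ((E - Dv) \<union> (Y \<union> g Y)) v"
    by metis
  define Succ where "Succ = {X\<in>Pow Dv. succ n S F ((E - Dv) \<union> X) v}"
  have inj: "inj_on (\<lambda>Y. Y \<union> g Y) (Pow (Dv - DR))"
  proof (rule inj_onI)
    fix Y1 Y2 assume h: "Y1 \<in> Pow (Dv - DR)" "Y2 \<in> Pow (Dv - DR)" "Y1 \<union> g Y1 = Y2 \<union> g Y2"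
    have "Y1 = (Y1 \<union> g Y1) - DR" using h(1) g by auto
    also have "\<dots> = (Y2 \<union> g Y2) - DR" using h(3) by simp
    also have "\<dots> = Y2" using h(2) g by auto
    finally show "Y1 = Y2" .
  qed
  have img: "(\<lambda>Y. Y \<union> g Y) ` Pow (Dv - DR) \<subseteq> Succ"
    unfolding Succ_def using g DRDv by auto
  have fSucc: "finite Succ" unfolding Succ_def using fDv by simp
  have "card (Pow (Dv - DR)) \<le> card Succ"
    by (rule card_inj_on_le[OF inj img fSucc])
  moreover have "card (Pow (Dv - DR)) = 2 ^ (card Dv - card DR)"
    using fDv DRDv by (simp add: card_Pow card_Diff_subset finite_subset)
  ultimately have cS: "2 ^ (card Dv - card DR) \<le> card Succ" by simp
  have fe: "{X\<in>Pow Dv. \<not> succ n S F ((E - Dv) \<union> X) v} = Pow Dv - Succ" unfolding Succ_def by auto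
  have SuccSub: "Succ \<subseteq> Pow Dv" unfolding Succ_def by auto
  have cF: "card (Pow Dv - Succ) = 2 ^ card Dv - card Succ"
    using SuccSub fDv by (simp add: card_Diff_subset card_Pow fSucc)
  have SuccLe: "card Succ \<le> 2 ^ card Dv" using SuccSub fDv card_mono[of "Pow Dv" Succ] by (simp add: card_Pow)
  define d where "d = card Dv"
  define r where "r = card DR"
  define p where "p = (2::real) ^ (d - r)"
  have rd: "r \<le> d" unfolding r_def d_def using DRDv fDv by (simp add: card_mono)
  have p2: "p * 2 ^ r = 2 ^ d" unfolding p_def using rd by (simp flip: power_add)
  have r2: "(2::real) ^ r \<le> 2 ^ (2 ^ card S)" unfolding r_def using cDR by (simp add: power_increasing)
  have "(2::real) ^ d / 2 ^ (2 ^ card S) = p * (2 ^ r / 2 ^ (2 ^ card S))" using p2 by simp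
  also have "\<dots> \<le> p * 1" using r2 by (intro mult_left_mono) (auto simp: p_def)
  finally have pb: "(2::real) ^ d / 2 ^ (2 ^ card S) \<le> p" by simp
  have "real (card {X\<in>Pow Dv. \<not> succ n S F ((E - Dv) \<union> X) v}) = 2 ^ d - real (card Succ)"
    unfolding fe cF d_def using SuccLe by (simp add: of_nat_diff)
  also have "\<dots> \<le> 2 ^ d - p" using cS unfolding p_def d_def r_def
    by (metis diff_left_mono of_nat_le_iff of_nat_numeral of_nat_power)
  also have "\<dots> \<le> (1 - 1 / 2 ^ (2 ^ card S)) * 2 ^ d" using pb by (simp add: algebra_simps)
  finally show ?thesis unfolding Dv_def d_def by simp
qed

lemma poly_geo_lim:
  assumes "0 < s" "s < (1::real)"
  shows "((\<lambda>n. real n ^ j * s ^ n) \<longlongrightarrow> 0) sequentially"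
proof -
  define t where "t = - ln s"
  have t: "t > 0" unfolding t_def using assms by simp
  have fl: "filterlim (\<lambda>n. t * real n) at_top sequentially"
    by (rule filterlim_tendsto_pos_mult_at_top[OF tendsto_const t filterlim_real_sequentially])
  have l1: "((\<lambda>n. (t * real n) ^ j / exp (t * real n)) \<longlongrightarrow> 0) sequentially"
    by (rule filterlim_compose[OF tendsto_power_div_exp_0 fl])
  have l2: "((\<lambda>n. (t * real n) ^ j / exp (t * real n) / t ^ j) \<longlongrightarrow> 0) sequentially"
    using tendsto_divide[OF l1 tendsto_const[of "t ^ j"]] t by simp
  have eq: "(t * real n) ^ j / exp (t * real n) / t ^ j = real n ^ j * s ^ n" for n
  proof -
    have "s ^ n = exp (real n * ln s)" using assms by (simp add: exp_of_nat_mult)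
    also have "\<dots> = inverse (exp (t * real n))" unfolding t_def by (simp add: exp_minus[symmetric] mult.commute)
    finally have "s ^ n = inverse (exp (t * real n))" .
    then show ?thesis using t by (simp add: power_mult_distrib field_simps)
  qed
  show ?thesis using l2 unfolding eq .
qed

lemma realUN:
  assumes "finite I"
  shows "real (card (\<Union>i\<in>I. X i)) \<le> (\<Sum>i\<in>I. real (card (X i)))"
proof -
  have "card (\<Union>i\<in>I. X i) \<le> (\<Sum>i\<in>I. card (X i))" by (rule card_UN_le[OF assms])
  then show ?thesis by (simp flip: of_nat_sum)
qed

lemma missb:
  assumes S: "S \<subseteq> {..<n}" and B: "B \<subseteq> {..<n}" and SB: "S \<inter> B = {}" and T: "T \<subseteq> S"
    and U: "U = {e. e \<subseteq> {..<n} \<and> card e = 2}"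
  shows "real (card {E\<in>Pow U. True \<and> (\<forall>w\<in>B. vtyp S E w \<noteq> T)}) \<le> (1 - 1 / 2 ^ card S) ^ card B * 2 ^ card U"
proof (rule indep_count[where D = "\<lambda>w. (\<lambda>s. {w, s}) ` S" and P = "\<lambda>w E. vtyp S E w \<noteq> T"
    and Q = "\<lambda>_. True" and I = B and U = U and q = "1 - 1 / 2 ^ card S"])
  have fS: "finite S" using S finite_subset by blast
  show "finite B" using B finite_subset by blast
  show "finite U" unfolding U by (rule finite_subset[of _ "Pow {..<n}"]) auto
  show "(0::real) \<le> 1 - 1 / 2 ^ card S" by simp
  show "\<forall>i\<in>B. (\<lambda>s. {i, s}) ` S \<subseteq> U"
  proof (intro ballI subsetI)
    fix w x assume w: "w \<in> B" and x: "x \<in> (\<lambda>s. {w, s}) ` S"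
    then obtain s where s: "s \<in> S" "x = {w, s}" by auto
    have "w \<noteq> s" using w s SB by auto
    then show "x \<in> U" unfolding U using s w S B by auto
  qed
  show "\<forall>i\<in>B. \<forall>j\<in>B. i \<noteq> j \<longrightarrow> (\<lambda>s. {i, s}) ` S \<inter> (\<lambda>s. {j, s}) ` S = {}"
  proof (intro ballI impI)
    fix w w' assume w: "w \<in> B" "w' \<in> B" "w \<noteq> w'"
    show "(\<lambda>s. {w, s}) ` S \<inter> (\<lambda>s. {w', s}) ` S = {}"
    proof (rule ccontr)
      assume "(\<lambda>s. {w, s}) ` S \<inter> (\<lambda>s. {w', s}) ` S \<noteq> {}"
      then obtain s s' where ss: "s \<in> S" "s' \<in> S" "{w, s} = {w', s'}" by blast
      have "w \<notin> S" using w SB by auto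
      then show False using ss w(3) by (auto simp: doubleton_eq_iff)
    qed
  qed
  show "\<forall>i\<in>B. \<forall>E E'. E \<subseteq> U \<longrightarrow> E' \<subseteq> U \<longrightarrow> (\<forall>e. e \<notin> \<Union> ((\<lambda>w. (\<lambda>s. {w, s}) ` S) ` (B - {i})) \<longrightarrow> (e \<in> E) = (e \<in> E')) \<longrightarrow> (vtyp S E i \<noteq> T) = (vtyp S E' i \<noteq> T)"
  proof (intro ballI allI impI)
    fix w E E' assume w: "w \<in> B" and ag: "\<forall>e. e \<notin> \<Union> ((\<lambda>w. (\<lambda>s. {w, s}) ` S) ` (B - {w})) \<longrightarrow> (e \<in> E) = (e \<in> E')"
    have "{w, s} \<notin> \<Union> ((\<lambda>w. (\<lambda>s. {w, s}) ` S) ` (B - {w}))" if "s \<in> S" for s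
    proof
      assume "{w, s} \<in> \<Union> ((\<lambda>w. (\<lambda>s. {w, s}) ` S) ` (B - {w}))"
      then obtain u s' where us: "u \<in> B" "u \<noteq> w" "s' \<in> S" "{w, s} = {u, s'}" by blast
      have "w \<notin> S" using w SB by auto
      then show False using us by (auto simp: doubleton_eq_iff)
    qed
    then have iff: "{w, s} \<in> E \<longleftrightarrow> {w, s} \<in> E'" if "s \<in> S" for s
      using that by (intro ag[rule_format]) simp
    then have "vtyp S E w = vtyp S E' w" unfolding vtyp_def by auto
    then show "(vtyp S E w \<noteq> T) = (vtyp S E' w \<noteq> T)" by simp
  qed
  show "\<forall>E E'. E \<subseteq> U \<longrightarrow> E' \<subseteq> U \<longrightarrow> (\<forall>e. e \<notin> \<Union> ((\<lambda>w. (\<lambda>s. {w, s}) ` S) ` B) \<longrightarrow> (e \<in> E) = (e \<in> E')) \<longrightarrow> True = True"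
    by simp
  show "\<forall>i\<in>B. \<forall>E. E \<subseteq> U \<longrightarrow> True \<longrightarrow> real (card {X \<in> Pow ((\<lambda>s. {i, s}) ` S). vtyp S (E - (\<lambda>s. {i, s}) ` S \<union> X) i \<noteq> T}) \<le> (1 - 1 / 2 ^ card S) * 2 ^ card ((\<lambda>s. {i, s}) ` S)"
  proof (intro ballI allI impI)
    fix w E assume w: "w \<in> B"
    have "w \<notin> S" using w SB by auto
    show "real (card {X \<in> Pow ((\<lambda>s. {w, s}) ` S). vtyp S (E - (\<lambda>s. {w, s}) ` S \<union> X) w \<noteq> T}) \<le> (1 - 1 / 2 ^ card S) * 2 ^ card ((\<lambda>s. {w, s}) ` S)"
      by (rule permiss[OF fS \<open>w \<notin> S\<close> T])
  qed
qed

lemma flb: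
  assumes S: "S \<subseteq> {..<n}" and A: "A \<subseteq> {..<n}" and B: "B \<subseteq> {..<n}"
    and disj: "S \<inter> A = {}" "S \<inter> B = {}" "A \<inter> B = {}"
    and U: "U = {e. e \<subseteq> {..<n} \<and> card e = 2}"
  shows "real (card {E\<in>Pow U. (\<forall>T. T \<noteq> {} \<and> T \<subseteq> S \<longrightarrow> (\<exists>w\<in>B. vtyp S E w = T)) \<and> (\<forall>v\<in>A. \<not> succ n S F E v)})
     \<le> (1 - 1 / 2 ^ (2 ^ card S)) ^ card A * 2 ^ card U"
proof (rule indep_count[where D = "\<lambda>v. (\<lambda>b. {v, b}) ` B" and P = "\<lambda>v E. \<not> succ n S F E v"
    and Q = "\<lambda>E. \<forall>T. T \<noteq> {} \<and> T \<subseteq> S \<longrightarrow> (\<exists>w\<in>B. vtyp S E w = T)" and I = A and U = U and q = "1 - 1 / 2 ^ (2 ^ card S)"])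
  show "finite A" using A finite_subset by blast
  show "finite U" unfolding U by (rule finite_subset[of _ "Pow {..<n}"]) auto
  show "(0::real) \<le> 1 - 1 / 2 ^ (2 ^ card S)" by simp
  show "\<forall>i\<in>A. (\<lambda>b. {i, b}) ` B \<subseteq> U"
  proof (intro ballI subsetI)
    fix v x assume v: "v \<in> A" and x: "x \<in> (\<lambda>b. {v, b}) ` B"
    then obtain b where b: "b \<in> B" "x = {v, b}" by auto
    have "v \<noteq> b" using v b disj by auto
    then show "x \<in> U" unfolding U using b v A B by auto
  qed
  show "\<forall>i\<in>A. \<forall>j\<in>A. i \<noteq> j \<longrightarrow> (\<lambda>b. {i, b}) ` B \<inter> (\<lambda>b. {j, b}) ` B = {}"
    using disj by (auto simp: doubleton_eq_iff)
  show "\<forall>i\<in>A. \<forall>E E'. E \<subseteq> U \<longrightarrow> E' \<subseteq> U \<longrightarrow> (\<forall>e. e \<notin> \<Union> ((\<lambda>v. (\<lambda>b. {v, b}) ` B) ` (A - {i})) \<longrightarrow> (e \<in> E) = (e \<in> E')) \<longrightarrow> (\<not> succ n S F E i) = (\<not> succ n S F E' i)"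
  proof (intro ballI allI impI)
    fix v E E' assume v: "v \<in> A" and ag: "\<forall>e. e \<notin> \<Union> ((\<lambda>v. (\<lambda>b. {v, b}) ` B) ` (A - {v})) \<longrightarrow> (e \<in> E) = (e \<in> E')"
    have nm: "{w, x} \<notin> \<Union> ((\<lambda>v. (\<lambda>b. {v, b}) ` B) ` (A - {v}))" if "x \<in> insert v C" "C \<subseteq> S" for w x C
      using that v disj by (auto simp: doubleton_eq_iff) blast+
    have "common_nbrs n E (insert v C) = common_nbrs n E' (insert v C)" if "C \<subseteq> S" for C
    proof -
      have iff: "{w, x} \<in> E \<longleftrightarrow> {w, x} \<in> E'" if "x \<in> insert v C" for w x
        by (intro ag[rule_format] nm[OF that \<open>C \<subseteq> S\<close>])
      have "{w\<in>{..<n}. \<forall>x\<in>insert v C. {w, x} \<in> E} = {w\<in>{..<n}. \<forall>x\<in>insert v C. {w, x} \<in> E'}"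
        using iff by auto
      then show ?thesis unfolding common_nbrs_def by simp
    qed
    then have "succ n S F E v = succ n S F E' v" unfolding succ_def by auto
    then show "(\<not> succ n S F E v) = (\<not> succ n S F E' v)" by simp
  qed
  show "\<forall>E E'. E \<subseteq> U \<longrightarrow> E' \<subseteq> U \<longrightarrow> (\<forall>e. e \<notin> \<Union> ((\<lambda>v. (\<lambda>b. {v, b}) ` B) ` A) \<longrightarrow> (e \<in> E) = (e \<in> E')) \<longrightarrow>
     (\<forall>T. T \<noteq> {} \<and> T \<subseteq> S \<longrightarrow> (\<exists>w\<in>B. vtyp S E w = T)) = (\<forall>T. T \<noteq> {} \<and> T \<subseteq> S \<longrightarrow> (\<exists>w\<in>B. vtyp S E' w = T))"
  proof (intro allI impI)
    fix E E' assume ag: "\<forall>e. e \<notin> \<Union> ((\<lambda>v. (\<lambda>b. {v, b}) ` B) ` A) \<longrightarrow> (e \<in> E) = (e \<in> E')"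
    have nm: "{w, s} \<notin> \<Union> ((\<lambda>v. (\<lambda>b. {v, b}) ` B) ` A)" if "w \<in> B" "s \<in> S" for w s
      using that disj by (auto simp: doubleton_eq_iff)
    have eqs: "vtyp S E w = vtyp S E' w" if "w \<in> B" for w
    proof -
      have "{w, s} \<in> E \<longleftrightarrow> {w, s} \<in> E'" if "s \<in> S" for s
        by (intro ag[rule_format] nm[OF \<open>w \<in> B\<close> that])
      then show ?thesis unfolding vtyp_def by auto
    qed
    have "(\<exists>w\<in>B. vtyp S E w = T) = (\<exists>w\<in>B. vtyp S E' w = T)" for T
      using eqs by auto
    then show "(\<forall>T. T \<noteq> {} \<and> T \<subseteq> S \<longrightarrow> (\<exists>w\<in>B. vtyp S E w = T)) = (\<forall>T. T \<noteq> {} \<and> T \<subseteq> S \<longrightarrow> (\<exists>w\<in>B. vtyp S E' w = T))"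
      by simp
  qed
  show "\<forall>i\<in>A. \<forall>E. E \<subseteq> U \<longrightarrow> (\<forall>T. T \<noteq> {} \<and> T \<subseteq> S \<longrightarrow> (\<exists>w\<in>B. vtyp S E w = T)) \<longrightarrow>
      real (card {X \<in> Pow ((\<lambda>b. {i, b}) ` B). \<not> succ n S F (E - (\<lambda>b. {i, b}) ` B \<union> X) i}) \<le> (1 - 1 / 2 ^ (2 ^ card S)) * 2 ^ card ((\<lambda>b. {i, b}) ` B)"
  proof (intro ballI allI impI)
    fix v E assume v: "v \<in> A" and Q: "\<forall>T. T \<noteq> {} \<and> T \<subseteq> S \<longrightarrow> (\<exists>w\<in>B. vtyp S E w = T)"
    show "real (card {X \<in> Pow ((\<lambda>b. {v, b}) ` B). \<not> succ n S F (E - (\<lambda>b. {v, b}) ` B \<union> X) v}) \<le> (1 - 1 / 2 ^ (2 ^ card S)) * 2 ^ card ((\<lambda>b. {v, b}) ` B)"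
      by (rule perv[OF S B disj v Q])
  qed
qed

lemma badcount:
  fixes k n :: nat
  shows "real (card {E\<in>all_graphs n. \<not> good_graph k n E})
     \<le> real (n choose k) * (2 ^ k + 2 ^ (2 ^ k)) * ((1 - 1 / 2 ^ (2 ^ k)) ^ ((n - k) div 2) * 2 ^ card {e. e \<subseteq> {..<n} \<and> card e = (2::nat)})"
proof -
  define \<rho> :: real where "\<rho> = 1 - 1 / 2 ^ (2 ^ k)"
  define U where "U = {e. e \<subseteq> {..<n} \<and> card e = (2::nat)}"
  define m where "m = (n - k) div 2"
  define SS where "SS = {S. S \<subseteq> {..<n} \<and> card S = k}"
  define M where "M = \<rho> ^ m * 2 ^ card U"
  define K :: real where "K = 2 ^ k + 2 ^ (2 ^ k)"
  have fU: "finite U" unfolding U_def by (rule finite_subset[of _ "Pow {..<n}"]) auto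
  have \<rho>0: "0 \<le> \<rho>" unfolding \<rho>_def by simp
  have M0: "0 \<le> M" unfolding M_def using \<rho>0 by simp
  have fSS: "finite SS" unfolding SS_def by (rule finite_subset[of _ "Pow {..<n}"]) auto
  have exA: "\<forall>S\<in>SS. \<exists>A. A \<subseteq> {..<n} - S \<and> card A = m"
  proof
    fix S assume "S \<in> SS"
    then have S0: "S \<subseteq> {..<n}" "card S = k" unfolding SS_def by auto
    then have "card ({..<n} - S) = card {..<n} - card S" by (intro card_Diff_subset) (auto intro: finite_subset)
    then have "card ({..<n} - S) = n - k" using S0 by simp
    then have "m \<le> card ({..<n} - S)" unfolding m_def by simp
    then obtain A where "A \<subseteq> {..<n} - S" "card A = m" by (rule obtain_subset_with_card_n)
    then show "\<exists>A. A \<subseteq> {..<n} - S \<and> card A = m" by blast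
  qed
  then obtain Af where Af: "\<forall>S\<in>SS. Af S \<subseteq> {..<n} - S \<and> card (Af S) = m" by metis
  define Bf where "Bf S = {..<n} - S - Af S" for S
  define NT where "NT S = {T. T \<noteq> {} \<and> T \<subseteq> S}" for S :: "nat set"
  define Miss where "Miss S T = {E\<in>Pow U. True \<and> (\<forall>w\<in>Bf S. vtyp S E w \<noteq> T)}" for S T
  define Fl where "Fl S F = {E\<in>Pow U. (\<forall>T. T \<noteq> {} \<and> T \<subseteq> S \<longrightarrow> (\<exists>w\<in>Bf S. vtyp S E w = T)) \<and> (\<forall>v\<in>Af S. \<not> succ n S F E v)}" for S F
  have cover: "{E\<in>all_graphs n. \<not> good_graph k n E} \<subseteq> (\<Union>S\<in>SS. (\<Union>T\<in>NT S. Miss S T) \<union> (\<Union>F\<in>Pow (NT S). Fl S F))"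
  proof
    fix E assume "E \<in> {E\<in>all_graphs n. \<not> good_graph k n E}"
    then have EU: "E \<in> Pow U" and ng: "\<not> good_graph k n E" by (auto simp: all_graphs_def U_def)
    from ng obtain S F where S: "S \<subseteq> {..<n}" "card S = k" and F: "F \<subseteq> {C. C \<noteq> {} \<and> C \<subseteq> S}"
      and nv: "\<not> (\<exists>v\<in>{..<n}. v \<notin> S \<and> (\<forall>C. C \<noteq> {} \<and> C \<subseteq> S \<longrightarrow> (C \<in> F \<longleftrightarrow> odd (common_nbrs n E (insert v C)))))"
      unfolding good_graph_def by blast
    have SS: "S \<in> SS" using S unfolding SS_def by auto
    show "E \<in> (\<Union>S\<in>SS. (\<Union>T\<in>NT S. Miss S T) \<union> (\<Union>F\<in>Pow (NT S). Fl S F))"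
    proof (cases "\<forall>T. T \<noteq> {} \<and> T \<subseteq> S \<longrightarrow> (\<exists>w\<in>Bf S. vtyp S E w = T)")
      case True
      have "\<forall>v\<in>Af S. \<not> succ n S F E v"
      proof
        fix v assume "v \<in> Af S"
        then have "v \<in> {..<n}" "v \<notin> S" using Af SS by auto
        then show "\<not> succ n S F E v" using nv unfolding succ_def by blast
      qed
      then have "E \<in> Fl S F" using EU True unfolding Fl_def by simp
      moreover have "F \<in> Pow (NT S)" using F unfolding NT_def by auto
      ultimately show ?thesis using SS by blast
    next
      case False
      then obtain T where "T \<noteq> {}" "T \<subseteq> S" "\<forall>w\<in>Bf S. vtyp S E w \<noteq> T" by blast
      then have "E \<in> Miss S T" "T \<in> NT S" using EU by (auto simp: Miss_def NT_def)
      then show ?thesis using SS by blast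
    qed
  qed
  have Sfacts: "S \<subseteq> {..<n} \<and> card S = k \<and> Af S \<subseteq> {..<n} \<and> Bf S \<subseteq> {..<n} \<and> S \<inter> Af S = {} \<and> S \<inter> Bf S = {} \<and> Af S \<inter> Bf S = {}
      \<and> card (Af S) = m \<and> m \<le> card (Bf S)" if "S \<in> SS" for S
  proof -
    have S: "S \<subseteq> {..<n}" "card S = k" using that unfolding SS_def by auto
    have A: "Af S \<subseteq> {..<n} - S" "card (Af S) = m" using Af that by auto
    have "card ({..<n} - S) = card {..<n} - card S" using S by (intro card_Diff_subset) (auto intro: finite_subset)
    then have c1: "card ({..<n} - S) = n - k" using S by simp
    have "card (Bf S) = card ({..<n} - S) - card (Af S)" unfolding Bf_def
      using A by (intro card_Diff_subset) (auto intro: finite_subset)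
    then have "card (Bf S) = (n - k) - m" using c1 A by simp
    then have "m \<le> card (Bf S)" unfolding m_def by simp
    then show ?thesis using S A unfolding Bf_def by auto
  qed
  have missS: "real (card (Miss S T)) \<le> M" if "S \<in> SS" "T \<in> NT S" for S T
  proof -
    note sf = Sfacts[OF that(1)]
    have TS: "T \<subseteq> S" using that(2) unfolding NT_def by auto
    have "real (card (Miss S T)) \<le> (1 - 1 / 2 ^ card S) ^ card (Bf S) * 2 ^ card U"
      unfolding Miss_def by (rule missb[OF _ _ _ TS U_def]) (use sf in auto)
    also have "(1 - 1 / 2 ^ card S) ^ card (Bf S) = ((1::real) - 1 / 2 ^ k) ^ card (Bf S)"
      using sf by simp
    also have "\<dots> \<le> ((1::real) - 1 / 2 ^ k) ^ m"
      by (rule power_decreasing) (use sf in auto)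
    also have "\<dots> \<le> \<rho> ^ m"
    proof (rule power_mono)
      have "(2::real) ^ k \<le> 2 ^ (2 ^ k)" by (rule power_increasing) (auto intro: less_imp_le[OF less_exp])
      then have "1 / (2::real) ^ (2 ^ k) \<le> 1 / 2 ^ k" by (rule divide_left_mono) auto
      then show "(1::real) - 1 / 2 ^ k \<le> \<rho>" unfolding \<rho>_def by simp
    qed simp
    finally show ?thesis unfolding M_def by (simp add: mult_right_mono)
  qed
  have flS: "real (card (Fl S F)) \<le> M" if "S \<in> SS" for S F
  proof -
    note sf = Sfacts[OF that(1)]
    have "real (card (Fl S F)) \<le> (1 - 1 / 2 ^ (2 ^ card S)) ^ card (Af S) * 2 ^ card U"
      unfolding Fl_def by (rule flb[OF _ _ _ _ _ _ U_def]) (use sf in auto)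
    then show ?thesis unfolding M_def \<rho>_def using sf by simp
  qed
  have fNT: "finite (NT S)" "card (NT S) \<le> 2 ^ k" if "S \<in> SS" for S
  proof -
    have S: "finite S" "card S = k" using that unfolding SS_def by (auto intro: finite_subset)
    have "NT S \<subseteq> Pow S" unfolding NT_def by auto
    then show "finite (NT S)" "card (NT S) \<le> 2 ^ k" using S card_mono[of "Pow S" "NT S"] finite_subset
      by (auto simp: card_Pow)
  qed
  have perS: "real (card ((\<Union>T\<in>NT S. Miss S T) \<union> (\<Union>F\<in>Pow (NT S). Fl S F))) \<le> K * M" if "S \<in> SS" for S
  proof -
    have "real (card ((\<Union>T\<in>NT S. Miss S T) \<union> (\<Union>F\<in>Pow (NT S). Fl S F)))
        \<le> real (card (\<Union>T\<in>NT S. Miss S T)) + real (card (\<Union>F\<in>Pow (NT S). Fl S F))"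
      using card_Un_le by (simp flip: of_nat_add)
    also have "\<dots> \<le> (\<Sum>T\<in>NT S. real (card (Miss S T))) + (\<Sum>F\<in>Pow (NT S). real (card (Fl S F)))"
      by (intro add_mono realUN) (use fNT[OF that] in auto)
    also have "\<dots> \<le> (\<Sum>T\<in>NT S. M) + (\<Sum>F\<in>Pow (NT S). M)"
      by (intro add_mono sum_mono missS flS that)
    also have "\<dots> = real (card (NT S)) * M + 2 ^ card (NT S) * M"
      using fNT[OF that] by (simp add: card_Pow)
    also have "\<dots> \<le> 2 ^ k * M + 2 ^ (2 ^ k) * M"
      using fNT[OF that] M0
      by (intro add_mono mult_right_mono) (auto intro: power_increasing simp flip: of_nat_le_iff)
    finally show ?thesis unfolding K_def by (simp add: algebra_simps)
  qed
  have fin: "finite (\<Union>S\<in>SS. (\<Union>T\<in>NT S. Miss S T) \<union> (\<Union>F\<in>Pow (NT S). Fl S F))"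
    by (rule finite_subset[of _ "Pow U"]) (use fU in \<open>auto simp: Miss_def Fl_def\<close>)
  have "real (card {E\<in>all_graphs n. \<not> good_graph k n E})
      \<le> real (card (\<Union>S\<in>SS. (\<Union>T\<in>NT S. Miss S T) \<union> (\<Union>F\<in>Pow (NT S). Fl S F)))"
    using card_mono[OF fin cover] by simp
  also have "\<dots> \<le> (\<Sum>S\<in>SS. real (card ((\<Union>T\<in>NT S. Miss S T) \<union> (\<Union>F\<in>Pow (NT S). Fl S F))))"
    by (rule realUN[OF fSS])
  also have "\<dots> \<le> (\<Sum>S\<in>SS. K * M)" by (rule sum_mono) (rule perS)
  also have "\<dots> = real (card SS) * K * M" by simp
  also have "card SS = n choose k" unfolding SS_def using n_subsets[of "{..<n}" k] by simp
  finally show ?thesis unfolding K_def M_def \<rho>_def m_def U_def by simp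
qed

theorem mainTheorem14:
  fixes k :: nat
  assumes "k \<ge> 1"
  shows "negl (\<lambda>n. 1 - prob_G n (good_graph k n))"
proof -
  define \<rho> :: real where "\<rho> = 1 - 1 / 2 ^ (2 ^ k)"
  define K :: real where "K = 2 ^ k + 2 ^ (2 ^ k)"
  define \<sigma> where "\<sigma> = sqrt \<rho>"
  have p2: "(2::real) ^ (2 ^ k) > 1" using assms by (intro one_less_power) auto
  have \<rho>: "0 < \<rho>" "\<rho> < 1" unfolding \<rho>_def using p2 by auto
  have \<sigma>: "0 < \<sigma>" "\<sigma> < 1" "\<sigma> ^ 2 = \<rho>" unfolding \<sigma>_def using \<rho> real_sqrt_less_iff[of \<rho> 1] by auto
  have K0: "0 \<le> K" unfolding K_def by simp
  define f where "f n = 1 - prob_G n (good_graph k n)" for n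
  have fb: "0 \<le> f n \<and> f n \<le> real (n choose k) * K * \<rho> ^ ((n - k) div 2)" for n
  proof -
    define U where "U = {e. e \<subseteq> {..<n} \<and> card e = (2::nat)}"
    have fU: "finite U" unfolding U_def by (rule finite_subset[of _ "Pow {..<n}"]) auto
    have AG: "all_graphs n = Pow U" unfolding all_graphs_def U_def by simp
    define g where "g = card {E\<in>all_graphs n. good_graph k n E}"
    define b where "b = card {E\<in>all_graphs n. \<not> good_graph k n E}"
    define N where "N = card (all_graphs n)"
    have N: "N = 2 ^ card U" unfolding N_def AG using fU by (simp add: card_Pow)
    have "all_graphs n = {E\<in>all_graphs n. good_graph k n E} \<union> {E\<in>all_graphs n. \<not> good_graph k n E}" by auto
    then have gb: "N = g + b" unfolding N_def g_def b_def
      by (metis (no_types, lifting) AG card_Un_disjoint disjoint_iff finite_Pow_iff fU finite_Un mem_Collect_eq)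
    have Npos: "real N > 0" using N by simp
    have fe: "f n = real b / real N"
      unfolding f_def prob_G_def using gb Npos by (simp add: field_simps g_def N_def b_def)
    have "real b \<le> real (n choose k) * K * (\<rho> ^ ((n - k) div 2) * real N)"
      using badcount[of n k] unfolding b_def N U_def K_def \<rho>_def by simp
    then have "real b / real N \<le> real (n choose k) * K * \<rho> ^ ((n - k) div 2)"
      using Npos by (simp add: divide_le_eq mult.assoc)
    then show ?thesis using fe Npos by simp
  qed
  show ?thesis unfolding negl_def
  proof
    fix c :: nat
    define g where "g n = (K / \<sigma> ^ (k + 1)) * (real n ^ (k + c) * \<sigma> ^ n)" for n
    have "(g \<longlongrightarrow> (K / \<sigma> ^ (k + 1)) * 0) sequentially"
      unfolding g_def by (intro tendsto_mult tendsto_const poly_geo_lim \<sigma>(1,2))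
    then have "(g \<longlongrightarrow> 0) sequentially" by simp
    then have ev1: "eventually (\<lambda>n. g n < 1) sequentially" by (rule order_tendstoD) simp
    have ev2: "eventually (\<lambda>n. n \<ge> k + 1) sequentially" by (rule eventually_ge_at_top)
    show "eventually (\<lambda>n. \<bar>1 - prob_G n (good_graph k n)\<bar> < 1 / real n ^ c) sequentially"
      using ev1 ev2
    proof eventually_elim
      case (elim n)
      have npos: "real n > 0" using elim(2) by simp
      have "\<rho> ^ ((n - k) div 2) = \<sigma> ^ (2 * ((n - k) div 2))" using \<sigma>(3) by (simp add: power_mult)
      also have "\<dots> \<le> \<sigma> ^ (n - k - 1)"
        by (rule power_decreasing) (use \<sigma> in auto)
      also have "\<sigma> ^ (n - k - 1) = \<sigma> ^ n / \<sigma> ^ (k + 1)"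
      proof -
        have "n = (n - k - 1) + (k + 1)" using elim(2) by simp
        then have "\<sigma> ^ n = \<sigma> ^ (n - k - 1) * \<sigma> ^ (k + 1)" by (metis power_add)
        then show ?thesis using \<sigma>(1) by simp
      qed
      finally have r1: "\<rho> ^ ((n - k) div 2) \<le> \<sigma> ^ n / \<sigma> ^ (k + 1)" .
      have nk: "n choose k \<le> n ^ k"
      proof (cases "k \<le> n")
        case True
        then show ?thesis by (rule binomial_le_pow)
      next
        case False
        then have "n < k" by simp
        then have "n choose k = 0" by (rule binomial_eq_0)
        then show ?thesis by (metis zero_le)
      qed
      have "real (n choose k) \<le> real n ^ k" using nk by (metis of_nat_le_iff of_nat_power)
      have "f n \<le> real (n choose k) * K * \<rho> ^ ((n - k) div 2)" using fb by blast
      also have "\<dots> \<le> real n ^ k * K * (\<sigma> ^ n / \<sigma> ^ (k + 1))"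
        by (intro mult_mono r1 \<open>real (n choose k) \<le> real n ^ k\<close> order_refl K0) (use \<rho> \<sigma> K0 in auto)
      also have "\<dots> = g n / real n ^ c"
        unfolding g_def using npos by (simp add: power_add field_simps)
      also have "\<dots> < 1 / real n ^ c"
        using elim(1) npos by (simp add: divide_strict_right_mono)
      finally have "f n < 1 / real n ^ c" .
      then show ?case using fb[of n] unfolding f_def by simp
    qed
  qed
qed

end
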